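(* Let $p$ be an odd prime. Any transversal of $B_p$ other than the main diagonal $\{(i,i,2i): i\in\mathbb{Z}_p\}$ contains at least $\log_2(p)+1$ triples $(r,c,s)$ with $r\neq c$. Equivalently, any transversal of $B_p$ meets the main diagonal in either $p$ cells or at most $p-\log_2(p)-1$ cells.
   Context: $B_p$ is the Latin square of order $p$ viewed as the set of triples $\{(i,j,i+j \bmod p): i,j\in\mathbb{Z}_p\}$ (row, column, symbol). A transversal of a Latin square of order $p$ is a set of $p$ of its triples that contains each row, each column and each symbol exactly once. The main diagonal consists of the cells $(i,i)$. *)

theory Defs
  imports "HOL-Computational_Algebra.Primes" Complex_Main
begin

(* Z_p represented as {0..<p}; B_p as a set of (row, column, symbol) triples *)
definition B :: "nat \<Rightarrow> (nat \<times> nat \<times> nat) set" where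
  "B p = {(i, j, (i + j) mod p) | i j. i < p \<and> j < p}"

definition is_transversal :: "nat \<Rightarrow> (nat \<times> nat \<times> nat) set \<Rightarrow> (nat \<times> nat \<times> nat) set \<Rightarrow> bool" where
  "is_transversal p L T \<longleftrightarrow> T \<subseteq> L \<and> finite T \<and> card T = p \<and>
     (\<forall>r<p. \<exists>!t\<in>T. fst t = r) \<and>
     (\<forall>c<p. \<exists>!t\<in>T. fst (snd t) = c) \<and>
     (\<forall>s<p. \<exists>!t\<in>T. snd (snd t) = s)"

definition main_diagonal :: "nat \<Rightarrow> (nat \<times> nat \<times> nat) set" where
  "main_diagonal p = {(i, i, (2 * i) mod p) | i. i < p}"

end

theory Submission
  imports Defs
begin


lemma sum_fire:
  fixes c f :: "nat \<Rightarrow> int"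
  assumes "finite F" "m \<in> F" "x \<in> F" "y \<in> F"
  shows "(\<Sum>v\<in>F. (c v - (if v = m then 2 else 0) + (if v = x then 1 else 0) + (if v = y then 1 else 0)) * f v)
         = (\<Sum>v\<in>F. c v * f v) - 2 * f m + f x + f y"
proof -
  have "(\<Sum>v\<in>F. (c v - (if v = m then 2 else 0) + (if v = x then 1 else 0) + (if v = y then 1 else 0)) * f v)
     = (\<Sum>v\<in>F. c v * f v) - (\<Sum>v\<in>F. (if v = m then 2 * f v else 0)) + (\<Sum>v\<in>F. (if v = x then f v else 0))
       + (\<Sum>v\<in>F. (if v = y then f v else 0))"
  proof -
    have e: "\<And>v. (c v - (if v = m then 2 else 0) + (if v = x then 1 else 0) + (if v = y then 1 else 0)) * f v
       = ((c v * f v - (if v = m then 2 * f v else 0)) + (if v = x then f v else 0)) + (if v = y then f v else 0)"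
      by (simp add: algebra_simps)
    show ?thesis unfolding e sum.distrib sum_subtractf by simp
  qed
  also have "\<dots> = (\<Sum>v\<in>F. c v * f v) - 2 * f m + f x + f y"
    using assms by (simp add: sum.delta)
  finally show ?thesis .
qed

lemma core_conn:
  fixes p :: nat and F :: "nat set" and a b :: "nat \<Rightarrow> nat" and w :: "nat \<Rightarrow> int"
  assumes prime: "prime p" and Fp: "F \<subseteq> {..<p}" and rF: "r \<in> F"
    and closed: "\<forall>m\<in>F. a m \<in> F \<and> b m \<in> F" and ar: "a r \<noteq> r"
    and rel: "\<forall>m\<in>F. int p dvd (int (a m) + int (b m) - 2 * int m)"
    and w0: "\<forall>v\<in>F. w v \<ge> 0" and wr: "w r = 0"
    and wdec: "\<forall>m\<in>F-{r}. w (a m) + w (b m) < 2 * w m"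
    and fin: "finite F"
  shows "p \<le> 2 ^ (card F - 1)"
proof -
  define f where "f v = int v - int r" for v
  have stab: "\<forall>c. (\<forall>v\<in>F. c v \<ge> 0) \<longrightarrow> nat (\<Sum>v\<in>F. c v * w v) = N \<longrightarrow>
     (\<exists>c'. (\<forall>v\<in>F-{r}. c' v = 0 \<or> c' v = 1) \<and> int p dvd ((\<Sum>v\<in>F. c' v * f v) - (\<Sum>v\<in>F. c v * f v)))" for N
  proof (induction N rule: less_induct)
    case (less N)
    show ?case
    proof (intro allI impI)
      fix c :: "nat \<Rightarrow> int"
      assume c0: "\<forall>v\<in>F. c v \<ge> 0" and cN: "nat (\<Sum>v\<in>F. c v * w v) = N"
      show "\<exists>c'. (\<forall>v\<in>F-{r}. c' v = 0 \<or> c' v = 1) \<and> int p dvd ((\<Sum>v\<in>F. c' v * f v) - (\<Sum>v\<in>F. c v * f v))"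
      proof (cases "\<forall>v\<in>F-{r}. c v = 0 \<or> c v = 1")
        case True then show ?thesis by (intro exI[of _ c]) simp
      next
        case False
        then obtain m where m: "m \<in> F" "m \<noteq> r" "c m \<ge> 2" using c0 by force
        define c1 where "c1 v = c v - (if v = m then 2 else 0) + (if v = a m then 1 else 0) + (if v = b m then 1 else 0)" for v
        have amF: "a m \<in> F" and bmF: "b m \<in> F" using closed m by auto
        have c10: "\<forall>v\<in>F. c1 v \<ge> 0" using c0 m unfolding c1_def by auto
        have s1: "(\<Sum>v\<in>F. c1 v * g v) = (\<Sum>v\<in>F. c v * g v) - 2 * g m + g (a m) + g (b m)" for g
          unfolding c1_def using sum_fire[OF fin m(1) amF bmF] by simp
        have phi0: "(\<Sum>v\<in>F. c1 v * w v) \<ge> 0" using c10 w0 by (intro sum_nonneg) simp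
        have "(\<Sum>v\<in>F. c1 v * w v) < (\<Sum>v\<in>F. c v * w v)"
          using s1[of w] wdec m by auto
        hence "nat (\<Sum>v\<in>F. c1 v * w v) < N" using cN phi0 by linarith
        then obtain c' where c': "\<forall>v\<in>F-{r}. c' v = 0 \<or> c' v = 1"
          "int p dvd ((\<Sum>v\<in>F. c' v * f v) - (\<Sum>v\<in>F. c1 v * f v))"
          using less.IH c10 by blast
        have "(\<Sum>v\<in>F. c1 v * f v) - (\<Sum>v\<in>F. c v * f v) = int (a m) + int (b m) - 2 * int m"
          using s1[of f] by (simp add: f_def)
        hence "int p dvd ((\<Sum>v\<in>F. c1 v * f v) - (\<Sum>v\<in>F. c v * f v))" using rel m by simp
        with c'(2) have "int p dvd ((\<Sum>v\<in>F. c' v * f v) - (\<Sum>v\<in>F. c v * f v))"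
          using dvd_add by fastforce
        with c'(1) show ?thesis by blast
      qed
    qed
  qed
  define g where "g A = (\<Sum>v\<in>A. f v) mod int p" for A
  have "{0..<int p} \<subseteq> g ` Pow (F - {r})"
  proof
    fix t assume t: "t \<in> {0..<int p}"
    define v0 where "v0 = a r"
    have v0F: "v0 \<in> F" and v0r: "v0 \<noteq> r" using closed rF ar v0_def by auto
    have "v0 < p" "r < p" using v0F rF Fp by auto
    have "f v0 \<noteq> 0" using v0r unfolding f_def by simp
    moreover have "\<bar>f v0\<bar> < int p" using \<open>v0 < p\<close> \<open>r < p\<close> unfolding f_def by auto
    ultimately have ndvd: "\<not> int p dvd f v0"
    proof -
      assume h1: "f v0 \<noteq> 0" and h2: "\<bar>f v0\<bar> < int p"
      show ?thesis
      proof
        assume "int p dvd f v0"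
        from dvd_imp_le_int[OF h1 this] h2 show False by simp
      qed
    qed
    have pp: "prime (int p)" using prime by simp
    have cop: "coprime (int p) (f v0)" using prime_imp_coprime[OF pp ndvd] .
    obtain u v where uv: "u * f v0 + v * int p = 1"
      using bezout_int[of "f v0" "int p"] cop by (auto simp: gcd.commute coprime_iff_gcd_eq_1)
    define n where "n = (t * u) mod int p"
    have n0: "n \<ge> 0" unfolding n_def using prime prime_gt_0_nat by simp
    have d1: "int p dvd (n - t * u)" unfolding n_def by (simp add: mod_eq_dvd_iff[symmetric])
    have "t * u * f v0 - t = - (t * v) * int p" using uv by (simp add: algebra_simps) (metis mult.assoc right_diff_distrib' mult.commute diff_eq_eq mult_1_right)
    hence d2: "int p dvd (t * u * f v0 - t)" by simp
    have "n * f v0 - t = (n - t * u) * f v0 + (t * u * f v0 - t)" by (simp add: algebra_simps)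
    hence dn: "int p dvd (n * f v0 - t)" using d1 d2 by (metis dvd_add dvd_mult2)
    define c where "c v = (if v = v0 then n else 0)" for v
    have c0: "\<forall>v\<in>F. c v \<ge> 0" using n0 c_def by simp
    have sc: "(\<Sum>v\<in>F. c v * f v) = n * f v0"
    proof -
      have "(\<Sum>v\<in>F. c v * f v) = (\<Sum>v\<in>F. if v = v0 then n * f v else 0)"
        by (intro sum.cong) (auto simp: c_def)
      also have "\<dots> = n * f v0" using v0F fin by simp
      finally show ?thesis .
    qed
    obtain c' where c': "\<forall>v\<in>F-{r}. c' v = 0 \<or> c' v = 1"
      "int p dvd ((\<Sum>v\<in>F. c' v * f v) - (\<Sum>v\<in>F. c v * f v))"
      using stab c0 by blast
    define A where "A = {v\<in>F-{r}. c' v = 1}"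
    have "(\<Sum>v\<in>F. c' v * f v) = (\<Sum>v\<in>F-{r}. c' v * f v)"
      using fin rF by (simp add: sum.remove f_def)
    also have "\<dots> = (\<Sum>v\<in>F-{r}. if c' v = 1 then f v else 0)"
      using c'(1) by (intro sum.cong) auto
    also have "\<dots> = (\<Sum>v\<in>A. f v)" unfolding A_def using fin by (intro sum.inter_filter[symmetric]) simp
    finally have sA: "(\<Sum>v\<in>F. c' v * f v) = (\<Sum>v\<in>A. f v)" .
    have "int p dvd ((\<Sum>v\<in>A. f v) - t)" using c'(2) dn sc sA
      by (metis diff_add_cancel dvd_add add_diff_eq)
    hence "g A = t mod int p" unfolding g_def by (simp add: mod_eq_dvd_iff)
    also have "\<dots> = t" using t by simp
    finally show "t \<in> g ` Pow (F - {r})" unfolding A_def by blast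
  qed
  hence "card {0..<int p} \<le> card (g ` Pow (F - {r}))" using fin by (intro card_mono) auto
  also have "\<dots> \<le> card (Pow (F - {r}))" using fin by (intro card_image_le) auto
  also have "\<dots> = 2 ^ (card F - 1)" using fin rF by (simp add: card_Pow)
  finally show ?thesis by simp
qed
lemma core:
  fixes p :: nat and S :: "nat set" and a b :: "nat \<Rightarrow> nat"
  assumes prime: "prime p" and Sp: "S \<subseteq> {..<p}" and Sne: "S \<noteq> {}"
    and hyp: "\<forall>m\<in>S. a m \<in> S \<and> b m \<in> S \<and> a m \<noteq> m \<and> int p dvd (int (a m) + int (b m) - 2 * int m)"
  shows "p \<le> 2 ^ (card S - 1)"
proof -
  have finS: "finite S" using Sp finite_subset by blast
  define P where "P n \<longleftrightarrow> (\<exists>F. F \<subseteq> S \<and> F \<noteq> {} \<and> (\<forall>m\<in>F. a m \<in> F \<and> b m \<in> F) \<and> card F = n)" for n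
  have "P (card S)" unfolding P_def using Sne hyp by blast
  then obtain n where Pn: "P n" and nmin: "\<forall>k<n. \<not> P k" using exists_least_iff[of P] by blast
  then obtain F where FS: "F \<subseteq> S" and Fne: "F \<noteq> {}" and Fcl: "\<forall>m\<in>F. a m \<in> F \<and> b m \<in> F"
    and Fn: "card F = n" unfolding P_def by blast
  have finF: "finite F" using FS finS finite_subset by blast
  obtain r where rF: "r \<in> F" using Fne by blast
  define E where "E = {(v,u). v \<in> F \<and> (u = a v \<or> u = b v)}"
  have reach: "(v, r) \<in> E\<^sup>*" if vF: "v \<in> F" for v
  proof -
    define G where "G = {u. (v,u) \<in> E\<^sup>*}"
    have GF: "G \<subseteq> F"
    proof
      fix u assume "u \<in> G"
      hence "(v,u) \<in> E\<^sup>*" unfolding G_def by simp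
      thus "u \<in> F"
        by (induction rule: rtrancl_induct) (use vF Fcl in \<open>auto simp: E_def\<close>)
    qed
    have Gcl: "\<forall>m\<in>G. a m \<in> G \<and> b m \<in> G"
    proof
      fix m assume mG: "m \<in> G"
      hence "m \<in> F" using GF by blast
      hence "(m, a m) \<in> E" "(m, b m) \<in> E" unfolding E_def by auto
      with mG show "a m \<in> G \<and> b m \<in> G" unfolding G_def by (auto intro: rtrancl_into_rtrancl)
    qed
    have "v \<in> G" unfolding G_def by simp
    hence "P (card G)" unfolding P_def using GF FS Gcl by blast
    hence "\<not> card G < n" using nmin by blast
    hence "card F \<le> card G" using Fn by simp
    hence "G = F" using GF finF card_mono[OF finF GF] by (intro card_subset_eq) auto
    thus ?thesis using rF unfolding G_def by blast
  qed
  define d where "d v = (LEAST k. (v,r) \<in> E ^^ k)" for v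
  have dprop: "(v,r) \<in> E ^^ (d v)" if vF: "v \<in> F" for v
  proof -
    obtain k where "(v,r) \<in> E ^^ k" using reach[OF vF] rtrancl_power by blast
    thus ?thesis unfolding d_def by (rule LeastI)
  qed
  have dle: "(v,r) \<in> E ^^ k \<Longrightarrow> d v \<le> k" for v k unfolding d_def by (rule Least_le)
  have dr: "d r = 0" using dle[of r 0] by simp
  have ddec: "\<exists>y\<in>{a m, b m}. d y < d m" if mF: "m \<in> F" and mr: "m \<noteq> r" for m
  proof (cases "d m")
    case 0 then show ?thesis using dprop[OF mF] mr by simp
  next
    case (Suc k)
    then obtain y where "(m,y) \<in> E" "(y,r) \<in> E ^^ k" using dprop[OF mF] relpow_Suc_D2 by metis
    thus ?thesis using dle[of y k] Suc unfolding E_def by auto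
  qed
  define D where "D = Max (d ` F)"
  have dD: "d v \<le> D" if "v \<in> F" for v unfolding D_def using finF that by simp
  define w where "w v = (3::int) ^ D - 3 ^ (D - d v)" for v
  have w0: "\<forall>v\<in>F. w v \<ge> 0" unfolding w_def by (auto intro: power_increasing)
  have wr: "w r = 0" unfolding w_def dr by simp
  have wle: "w v \<le> 3 ^ D - 1" for v unfolding w_def by simp
  have wdec: "\<forall>m\<in>F-{r}. w (a m) + w (b m) < 2 * w m"
  proof
    fix m assume m: "m \<in> F - {r}"
    then obtain y where y: "y \<in> {a m, b m}" "d y < d m" using ddec by blast
    have "d m \<le> D" using dD m by auto
    hence "Suc (D - d m) \<le> D - d y" using y(2) by linarith
    hence "(3::int) ^ Suc (D - d m) \<le> 3 ^ (D - d y)" by (intro power_increasing) auto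
    hence wy: "w y \<le> 3 ^ D - 3 * 3 ^ (D - d m)" unfolding w_def by simp
    have pos: "(0::int) < 3 ^ (D - d m)" by simp
    show "w (a m) + w (b m) < 2 * w m"
      using y(1) wy wle[of "a m"] wle[of "b m"] pos unfolding w_def[of m] by auto
  qed
  have ar: "a r \<noteq> r" using hyp rF FS by blast
  have "p \<le> 2 ^ (card F - 1)"
    using core_conn[OF prime _ rF Fcl ar _ w0 wr wdec finF] Sp FS hyp by blast
  also have "\<dots> \<le> 2 ^ (card S - 1)"
    using card_mono[OF finS FS] by (intro power_increasing) auto
  finally show ?thesis .
qed

lemma nat_mod_dvd: "(x::nat) mod p = y mod p \<Longrightarrow> int p dvd (int x - int y)"
  by (metis mod_eq_dvd_iff of_nat_mod)

lemma dvd_small_eq: "(x::nat) < p \<Longrightarrow> y < p \<Longrightarrow> int p dvd (int x - int y) \<Longrightarrow> x = y"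
proof (rule ccontr)
  assume h: "x < p" "y < p" "int p dvd (int x - int y)" "x \<noteq> y"
  hence "int x - int y \<noteq> 0" by simp
  from dvd_imp_le_int[OF this h(3)] h(1,2) show False by simp
qed

theorem corollary6p2:
  fixes p :: nat and T :: "(nat \<times> nat \<times> nat) set"
  assumes "prime p" and "odd p"
    and "is_transversal p (B p) T"
    and "T \<noteq> main_diagonal p"
  shows "real (card {t \<in> T. fst t \<noteq> fst (snd t)}) \<ge> log 2 (real p) + 1"
proof -
  have prime: "prime p" and oddp: "odd p" using assms by auto
  have TB: "T \<subseteq> B p" and row: "\<forall>r<p. \<exists>!t\<in>T. fst t = r"
    and col: "\<forall>c<p. \<exists>!t\<in>T. fst (snd t) = c" and sym: "\<forall>s<p. \<exists>!t\<in>T. snd (snd t) = s"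
    using assms(3) unfolding is_transversal_def by auto
  have p2: "p \<ge> 2" using prime prime_ge_2_nat by blast
  have Tform: "\<exists>i j. i < p \<and> j < p \<and> t = (i, j, (i+j) mod p)" if "t \<in> T" for t
    using TB that unfolding B_def by blast
  define \<sigma> where "\<sigma> i = (SOME j. j < p \<and> (i, j, (i+j) mod p) \<in> T)" for i
  have sig: "\<sigma> i < p \<and> (i, \<sigma> i, (i + \<sigma> i) mod p) \<in> T" if ip: "i < p" for i
  proof -
    obtain t where t: "t \<in> T" "fst t = i" using row ip by blast
    then obtain i' j where "i' < p" "j < p" "t = (i', j, (i'+j) mod p)" using Tform by blast
    hence "\<exists>j. j < p \<and> (i, j, (i+j) mod p) \<in> T" using t by auto
    thus ?thesis unfolding \<sigma>_def by (rule someI_ex)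
  qed
  have uniq: "j = \<sigma> i" if "(i, j, (i+j) mod p) \<in> T" "i < p" for i j
  proof -
    have "(i, j, (i+j) mod p) = (i, \<sigma> i, (i + \<sigma> i) mod p)"
      using row that sig[of i] by (metis fst_conv)
    thus ?thesis by simp
  qed
  have Teq: "T = (\<lambda>i. (i, \<sigma> i, (i + \<sigma> i) mod p)) ` {..<p}"
  proof
    show "T \<subseteq> (\<lambda>i. (i, \<sigma> i, (i + \<sigma> i) mod p)) ` {..<p}"
    proof
      fix t assume "t \<in> T"
      then obtain i j where "i < p" "j < p" "t = (i, j, (i+j) mod p)" using Tform by blast
      with uniq \<open>t \<in> T\<close> show "t \<in> (\<lambda>i. (i, \<sigma> i, (i + \<sigma> i) mod p)) ` {..<p}" by auto
    qed
  qed (use sig in auto)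
  have sinj: "i = i'" if "i < p" "i' < p" "\<sigma> i = \<sigma> i'" for i i'
  proof -
    have "\<sigma> i < p" using sig that by blast
    hence "(i, \<sigma> i, (i + \<sigma> i) mod p) = (i', \<sigma> i', (i' + \<sigma> i') mod p)"
      using col sig[OF that(1)] sig[OF that(2)] that(3) by (metis fst_conv snd_conv)
    thus ?thesis by simp
  qed
  have gsurj: "\<exists>i<p. (i + \<sigma> i) mod p = s" if sp: "s < p" for s
  proof -
    obtain t where t: "t \<in> T" "snd (snd t) = s" using sym sp by blast
    then obtain i j where "i < p" "j < p" "t = (i, j, (i+j) mod p)" using Tform by blast
    with uniq t show ?thesis by auto
  qed
  define S where "S = {i. i < p \<and> \<sigma> i \<noteq> i}"
  have Sp: "S \<subseteq> {..<p}" unfolding S_def by auto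
  have "{t \<in> T. fst t \<noteq> fst (snd t)} = (\<lambda>i. (i, \<sigma> i, (i + \<sigma> i) mod p)) ` S"
    unfolding Teq S_def by auto
  hence cardeq: "card {t \<in> T. fst t \<noteq> fst (snd t)} = card S"
    by (simp add: card_image inj_on_def)
  have Sne: "S \<noteq> {}"
  proof
    assume "S = {}"
    hence "\<forall>i<p. \<sigma> i = i" unfolding S_def by auto
    hence "T = main_diagonal p" unfolding Teq main_diagonal_def by (auto simp: mult_2)
    with assms(4) show False by simp
  qed
  define a where "a m = (SOME i. i < p \<and> (i + \<sigma> i) mod p = (2*m) mod p)" for m
  define b where "b m = \<sigma> (a m)" for m
  have p3: "int p > 2" using oddp p2 by (cases "p = 2") auto
  have p2dvd: "\<not> int p dvd 2" using p3 zdvd_imp_le[of "int p" 2] by linarith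
  have hyp: "\<forall>m\<in>S. a m \<in> S \<and> b m \<in> S \<and> a m \<noteq> m \<and> int p dvd (int (a m) + int (b m) - 2 * int m)"
  proof
    fix m assume mS: "m \<in> S"
    hence mp: "m < p" and sm: "\<sigma> m \<noteq> m" unfolding S_def by auto
    have "(2*m) mod p < p" using p2 by simp
    then have "\<exists>i. i < p \<and> (i + \<sigma> i) mod p = (2*m) mod p" using gsurj by blast
    hence "a m < p \<and> (a m + \<sigma> (a m)) mod p = (2*m) mod p" unfolding a_def by (rule someI_ex)
    hence am: "a m < p" "(a m + \<sigma> (a m)) mod p = (2*m) mod p" by auto
    have rel: "int p dvd (int (a m) + int (b m) - 2 * int m)"
      using nat_mod_dvd[OF am(2)] unfolding b_def by simp
    have ne: "a m \<noteq> m"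
    proof
      assume "a m = m"
      hence "int p dvd (int (\<sigma> m) - int m)" using rel unfolding b_def by simp
      hence "\<sigma> m = m" using sig mp by (intro dvd_small_eq) auto
      with sm show False by simp
    qed
    have aS: "\<sigma> (a m) \<noteq> a m"
    proof
      assume h: "\<sigma> (a m) = a m"
      hence "int p dvd 2 * (int (a m) - int m)" using rel unfolding b_def by (simp add: algebra_simps)
      hence "int p dvd (int (a m) - int m)" using p2dvd prime
        by (metis prime_dvd_mult_iff prime_nat_int_transfer)
      hence "a m = m" using am mp by (intro dvd_small_eq) auto
      with ne show False by simp
    qed
    have bS: "b m \<in> S"
      unfolding b_def S_def using sig[OF am(1)] sinj[of "\<sigma> (a m)" "a m"] aS am(1) by auto
    show "a m \<in> S \<and> b m \<in> S \<and> a m \<noteq> m \<and> int p dvd (int (a m) + int (b m) - 2 * int m)"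
      using am(1) aS bS ne rel unfolding S_def by auto
  qed
  have pk: "p \<le> 2 ^ (card S - 1)" using core[OF prime Sp Sne hyp] .
  have finS: "finite S" using Sp finite_subset by blast
  have k1: "card S \<ge> 1" using Sne finS by (simp add: Suc_le_eq card_gt_0_iff)
  have "real p \<le> 2 ^ (card S - 1)" using pk by (metis of_nat_le_iff of_nat_numeral of_nat_power)
  hence "log 2 (real p) \<le> log 2 (2 ^ (card S - 1))" using p2 by (subst log_le_cancel_iff) auto
  also have "\<dots> = real (card S - 1)" by simp
  finally have "log 2 (real p) + 1 \<le> real (card S - 1) + 1" by simp
  also have "\<dots> = real (card S)" using k1 by simp
  finally show ?thesis using cardeq by simp
qed

end
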